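(* Let $m$ balls be placed independently and uniformly at random into $n$ bins, where $m=\Theta(n)$, and let $\mu = m/n$. Let $x>1$ and $k\ge 1$. Then with probability $1-2^{-\Omega(k)}$ there does not exist any $i$ such that the first $i$ bins contain at least $(1+1/x)\, i\mu + kx$ balls.
   Context: The bins are indexed $1,\dots,n$; "the first $i$ bins" means bins $1,\dots,i$. The constant in $\Omega(k)$ does not depend on $x,k,n$. *)

theory Defs
  imports "HOL-Probability.Probability"
begin

text \<open>Balls are indexed 0..m-1, bins 1..n. An outcome assigns each ball a bin;
  the uniform distribution over all assignments models independent uniform placement.\<close>
definition balls_into_bins :: "nat \<Rightarrow> nat \<Rightarrow> (nat \<Rightarrow> nat) pmf" where
  "balls_into_bins m n = pmf_of_set (PiE {..<m} (\<lambda>_. {1..n}))"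

definition prefix_load :: "nat \<Rightarrow> (nat \<Rightarrow> nat) \<Rightarrow> nat \<Rightarrow> nat" where
  "prefix_load m f i = card {b \<in> {..<m}. f b \<le> i}"

end

theory Submission
  imports Defs
begin


lemma upper_an:
  fixes N J I Mm L x k :: real
  assumes N: "N > 0" and J: "2*J \<le> N" and I0: "0 \<le> I" and IJ: "I \<le> J"
    and x: "x > 1" and k: "k \<ge> 0" and L0: "0 \<le> L" and LM: "L \<le> Mm"
    and LT: "L \<ge> (1 + 1/x) * I * (Mm / N) + k * x"
  defines "r \<equiv> 1 + 1/(2*x)"
  defines "B \<equiv> ((J - I) * r + (N - J)) / (N - I)"
  defines "B0 \<equiv> (J * r + (N - J)) / N"
  shows "L * ln r + (Mm - L) * ln B \<ge> Mm * ln B0 + k / 12"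
proof -
  define e where "e = 1/(2*x)"
  define \<mu> where "\<mu> = Mm / N"
  have e0: "0 < e" "e \<le> 1/2" using x by (auto simp: e_def field_simps)
  have re: "r = 1 + e" unfolding r_def e_def by simp
  have NI: "N - I > 0" using J IJ N by linarith
  have NJ: "N - J > 0" using J N IJ I0 by linarith
  have Beq: "B = 1 + (J - I) / (N - I) * e" using NI x unfolding B_def r_def e_def by (simp add: field_simps)
  have B0eq: "B0 = 1 + J / N * e" using N x unfolding B0_def r_def e_def by (simp add: field_simps)
  have p0: "(J - I) / (N - I) \<ge> 0" using IJ NI by simp
  have p1: "(J - I) / (N - I) \<le> 1" using IJ NI I0 J by (simp add: divide_le_eq_1)
  have pe0: "(J - I) / (N - I) * e \<ge> 0" by (rule mult_nonneg_nonneg[OF p0]) (use e0 in simp)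
  have B1: "B \<ge> 1" using Beq pe0 by linarith
  have pe1: "(J - I) / (N - I) * e \<le> e" using mult_left_le_one_le[OF _ p0 p1, of e] e0 by (simp add: mult.commute)
  have Br: "B \<le> r" using Beq pe1 unfolding r_def e_def by linarith
  have rB: "r - B = e * ((N - J) / (N - I))" using NI x unfolding Beq r_def e_def by (simp add: field_simps)
  have B0B: "Mm * (B0 - B) = \<mu> * I * (r - B)"
    unfolding Beq B0eq rB \<mu>_def using NI N by (simp add: field_simps re)
  define u where "u = (r - B) / B"
  have u0: "u \<ge> 0" using Br B1 unfolding u_def by simp
  have ule: "u \<le> e" proof -
    have "u \<le> r - B" unfolding u_def using B1 Br by (simp add: divide_le_eq mult_le_cancel_left1)
    also have "r - B \<le> e" unfolding rB
    proof (rule mult_left_le)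
      show "(N - J) / (N - I) \<le> 1" using NI IJ by (simp add: divide_le_eq_1)
    qed (use e0 in simp)
    finally show ?thesis .
  qed
  have uge: "u \<ge> e / 3" proof -
    have q: "(N - J) / (N - I) \<ge> 1/2" using NI J N I0 by (simp add: field_simps)
    have "r - B \<ge> e / 2" unfolding rB using mult_left_mono[OF q, of e] e0 by simp
    moreover have "B \<le> 3/2" using Br e0 re by linarith
    moreover have "B * e \<le> 3/2 * e" using \<open>B \<le> 3/2\<close> e0 by (intro mult_right_mono) auto
    ultimately show ?thesis unfolding u_def using B1
      by (simp add: field_simps)
  qed
  have F1: "ln B0 - ln B \<le> (B0 - B) / B"
  proof -
    have "J / N * e \<ge> 0" using I0 IJ N e0 by simp
    hence "B0 > 0" using B0eq by linarith
    then have "ln (B0 / B) \<le> B0 / B - 1" using B1 by (intro ln_le_minus_one) simp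
    moreover have "ln (B0 / B) = ln B0 - ln B" using B1 \<open>B0 > 0\<close> by (intro ln_divide_pos) auto
    moreover have "B0 / B - 1 = (B0 - B) / B" using B1 by (simp add: field_simps)
    ultimately show ?thesis by simp
  qed
  have F3: "ln r - ln B \<ge> u - u^2"
  proof -
    have "r / B = 1 + u" unfolding u_def using B1 by (simp add: field_simps)
    moreover have "u - u^2 \<le> ln (1 + u)" using u0 ule e0 by (intro ln_one_plus_pos_lower_bound) auto
    moreover have "ln (r / B) = ln r - ln B" using B1 Br by (intro ln_divide_pos) auto
    ultimately show ?thesis by simp
  qed
  have lnrB0: "ln r - ln B \<ge> 0" using B1 Br by simp
  have F5: "(1 + 1/x) * (u - u^2) \<ge> u"
  proof -
    have "u * (1 + 1/x) \<le> e * (1 + 1/x)" using ule x by (intro mult_right_mono) auto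
    also have "e * (1 + 1/x) \<le> 1/x" unfolding e_def using x by (simp add: field_simps)
    finally have "u * (1 + 1/x) \<le> 1/x" .
    hence "0 \<le> 1/x - u - u/x" by (simp add: algebra_simps)
    hence "0 \<le> u * (1/x - u - u/x)" using u0 by simp
    moreover have "(1 + 1/x) * (u - u^2) - u = u * (1/x - u - u/x)" by (simp add: algebra_simps power2_eq_square diff_divide_distrib)
    ultimately show ?thesis by linarith
  qed
  have F6: "k * x * (u - u^2) \<ge> k / 12"
  proof -
    have "u * u \<le> u * (1/2)" using u0 ule e0 by (intro mult_left_mono) auto
    hence "u - u^2 \<ge> u / 2" by (simp add: power2_eq_square)
    hence "u - u^2 \<ge> e / 6" using uge by linarith
    hence "k * x * (u - u^2) \<ge> k * x * (e / 6)" using k x by (intro mult_left_mono) auto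
    thus ?thesis using x unfolding e_def by simp
  qed
  have "L * ln r + (Mm - L) * ln B - Mm * ln B0 = L * (ln r - ln B) - Mm * (ln B0 - ln B)"
    by (simp add: algebra_simps)
  also have "\<dots> \<ge> ((1 + 1/x) * I * \<mu> + k * x) * (u - u^2) - \<mu> * I * u"
  proof -
    have a: "L * (ln r - ln B) \<ge> ((1 + 1/x) * I * \<mu> + k * x) * (u - u^2)"
    proof -
      have "L * (ln r - ln B) \<ge> ((1 + 1/x) * I * \<mu> + k * x) * (ln r - ln B)"
        using LT lnrB0 unfolding \<mu>_def by (intro mult_right_mono) auto
      moreover have "((1 + 1/x) * I * \<mu> + k * x) * (ln r - ln B) \<ge> ((1 + 1/x) * I * \<mu> + k * x) * (u - u^2)"
        using F3 x I0 k N L0 LM by (intro mult_left_mono) (auto simp: \<mu>_def)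
      ultimately show ?thesis by linarith
    qed
    have b: "Mm * (ln B0 - ln B) \<le> \<mu> * I * u"
    proof -
      have "Mm \<ge> 0" using L0 LM by simp
      hence "Mm * (ln B0 - ln B) \<le> Mm * ((B0 - B) / B)" using F1 by (intro mult_left_mono)
      also have "\<dots> = \<mu> * I * u" using B0B unfolding u_def by (simp add: field_simps)
      finally show ?thesis .
    qed
    show ?thesis using a b by linarith
  qed
  finally have "L * ln r + (Mm - L) * ln B - Mm * ln B0 \<ge> k * x * (u - u^2) + \<mu> * I * ((1 + 1/x) * (u - u^2) - u)"
    by (simp add: algebra_simps)
  moreover have "\<mu> * I * ((1 + 1/x) * (u - u^2) - u) \<ge> 0"
    using F5 I0 L0 LM N unfolding \<mu>_def by (intro mult_nonneg_nonneg) auto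
  ultimately show ?thesis using F6 by linarith
qed



lemma lower_an:
  fixes N J j Mm R x k :: real
  assumes N: "N > 0" and J: "2*J \<le> N" and j0: "0 \<le> j" and jJ: "j \<le> J"
    and x: "x > 1" and k: "k \<ge> 0" and R0: "0 \<le> R" and M0: "0 \<le> Mm"
    and RT: "R \<le> Mm - k * x - (1 + 1/x) * (N - j) * (Mm / N)"
  defines "r \<equiv> 1 - 1/x"
  defines "B \<equiv> ((J - j) * r + (N - J)) / (N - j)"
  defines "B0 \<equiv> (J * r + (N - J)) / N"
  shows "R * ln r + (Mm - R) * ln B \<ge> Mm * ln B0 + k / 2"
proof -
  define d where "d = 1/x"
  define \<mu> where "\<mu> = Mm / N"
  have d0: "0 < d" "d < 1" using x by (auto simp: d_def field_simps)
  have rd: "r = 1 - d" unfolding r_def d_def by simp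
  have Nj: "N - j > 0" using J jJ N j0 by linarith
  have NJ: "N - J > 0" using J N jJ j0 by linarith
  have Beq: "B = 1 - (J - j) / (N - j) * d" using Nj x unfolding B_def r_def d_def by (simp add: field_simps)
  have B0eq: "B0 = 1 - J / N * d" using N x unfolding B0_def r_def d_def by (simp add: field_simps)
  have p0: "(J - j) / (N - j) \<ge> 0" using jJ Nj by simp
  have p1: "(J - j) / (N - j) \<le> 1" using jJ Nj j0 J by (simp add: divide_le_eq_1)
  have pe0: "(J - j) / (N - j) * d \<ge> 0" by (rule mult_nonneg_nonneg[OF p0]) (use d0 in simp)
  have pe1: "(J - j) / (N - j) * d \<le> d" using mult_left_le_one_le[OF _ p0 p1, of d] d0 by (simp add: mult.commute)
  have B1: "B \<le> 1" using Beq pe0 by linarith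
  have Br: "B \<ge> r" using Beq pe1 rd by linarith
  have r0: "r > 0" using rd d0 by simp
  have r1: "r \<le> 1" using rd d0 by simp
  have Bmr: "B - r = d * ((N - J) / (N - j))" using Nj x unfolding Beq rd by (simp add: field_simps)
  have G2: "Mm * (B - B0) = \<mu> * j * (B - r)"
    unfolding Beq B0eq Bmr \<mu>_def using Nj N by (simp add: field_simps rd)
  have B00: "B0 > 0"
  proof -
    have "J / N \<le> 1" using J N jJ j0 by (simp add: divide_le_eq_1)
    hence "J / N * d \<le> d" using mult_left_le_one_le[of d "J/N"] d0 jJ j0 N by (simp add: mult.commute)
    thus ?thesis using B0eq d0 by linarith
  qed
  have G1: "ln B - ln B0 \<ge> (B - B0) / B"
  proof -
    have "ln (B0 / B) \<le> B0 / B - 1" using Br r0 B00 by (intro ln_le_minus_one) simp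
    moreover have "ln (B0 / B) = ln B0 - ln B" using Br r0 B00 by (intro ln_divide_pos) auto
    moreover have "B0 / B - 1 = - ((B - B0) / B)" using Br r0 by (simp add: field_simps)
    ultimately show ?thesis by linarith
  qed
  have G3: "ln B - ln r \<le> (B - r) / r"
  proof -
    have "ln (B / r) \<le> B / r - 1" using Br r0 by (intro ln_le_minus_one) simp
    moreover have "ln (B / r) = ln B - ln r" using Br r0 by (intro ln_divide_pos) auto
    moreover have "B / r - 1 = (B - r) / r" using r0 by (simp add: field_simps)
    ultimately show ?thesis by simp
  qed
  have G30: "ln B - ln r \<ge> 0" using Br r0 by simp
  have Bmr0: "B - r \<ge> 0" using Br by simp
  have Tle: "Mm - k * x - (1 + 1/x) * (N - j) * \<mu> \<le> \<mu> * j * r - k * x"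
  proof -
    have mu0: "\<mu> \<ge> 0" using M0 N unfolding \<mu>_def by simp
    have "Mm = N * \<mu>" unfolding \<mu>_def using N by simp
    moreover have "(N - j) * \<mu> * d \<ge> j * \<mu> * d"
      using J jJ mu0 d0 by (intro mult_right_mono) auto
    moreover have "1 + 1/x = 1 + d" by (simp add: d_def)
    ultimately show ?thesis unfolding rd by (simp add: algebra_simps)
  qed
  have "R * ln r + (Mm - R) * ln B - Mm * ln B0 = Mm * (ln B - ln B0) - R * (ln B - ln r)"
    by (simp add: algebra_simps)
  also have "\<dots> \<ge> \<mu> * j * (B - r) - (\<mu> * j * r - k * x) * ((B - r) / r)"
  proof -
    have a: "Mm * (ln B - ln B0) \<ge> \<mu> * j * (B - r)"
    proof -
      have "Mm * (ln B - ln B0) \<ge> Mm * ((B - B0) / B)" using G1 M0 by (intro mult_left_mono)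
      moreover have "Mm * ((B - B0) / B) = \<mu> * j * (B - r) / B" using G2 by simp
      moreover have "\<mu> * j * (B - r) / B \<ge> \<mu> * j * (B - r)"
      proof -
        have "\<mu> * j * (B - r) \<ge> 0" using M0 N j0 Bmr0 unfolding \<mu>_def by simp
        moreover have "\<mu> * j * (B - r) * B \<le> \<mu> * j * (B - r)" using mult_left_le[OF B1 \<open>\<mu> * j * (B - r) \<ge> 0\<close>] .
        ultimately show ?thesis using B1 Br r0 by (simp add: le_divide_eq)
      qed
      ultimately show ?thesis by linarith
    qed
    have b: "R * (ln B - ln r) \<le> (\<mu> * j * r - k * x) * ((B - r) / r)"
    proof -
      have "R * (ln B - ln r) \<le> R * ((B - r) / r)" using G3 R0 by (intro mult_left_mono)
      also have "\<dots> \<le> (\<mu> * j * r - k * x) * ((B - r) / r)"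
        using RT Tle Bmr0 r0 unfolding \<mu>_def by (intro mult_right_mono) auto
      finally show ?thesis .
    qed
    show ?thesis using a b by linarith
  qed
  also have "\<mu> * j * (B - r) - (\<mu> * j * r - k * x) * ((B - r) / r) = k * x * ((B - r) / r)"
    using r0 by (simp add: field_simps)
  finally have main: "R * ln r + (Mm - R) * ln B - Mm * ln B0 \<ge> k * x * ((B - r) / r)" .
  have "(B - r) * r \<le> B - r" using mult_left_le[OF r1 Bmr0] .
  hence "(B - r) / r \<ge> B - r" using r0 by (simp add: le_divide_eq)
  moreover have "B - r \<ge> d / 2"
  proof -
    have q: "(N - J) / (N - j) \<ge> 1/2" using Nj J N j0 by (simp add: field_simps)
    show ?thesis unfolding Bmr using mult_left_mono[OF q, of d] d0 by simp
  qed
  ultimately have "(B - r) / r \<ge> d / 2" by linarith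
  hence "k * x * ((B - r) / r) \<ge> k * x * (d / 2)" using k x by (intro mult_left_mono) auto
  moreover have "k * x * (d / 2) = k / 2" using x unfolding d_def by simp
  ultimately show ?thesis using main by linarith
qed



lemma doob_finite:
  fixes M :: "nat \<Rightarrow> 'a \<Rightarrow> real" and t :: "nat \<Rightarrow> 'a \<Rightarrow> 'b"
  assumes fin: "finite \<Omega>" and nn: "\<And>f. f \<in> \<Omega> \<Longrightarrow> M J f \<ge> 0" and th: "\<Theta> > 0"
    and mart: "\<And>i S. i \<le> J \<Longrightarrow> S \<subseteq> \<Omega> \<Longrightarrow>
        (\<And>f g. f \<in> S \<Longrightarrow> g \<in> \<Omega> \<Longrightarrow> t i f = t i g \<Longrightarrow> g \<in> S) \<Longrightarrow> sum (M J) S = sum (M i) S"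
    and dep: "\<And>i i' f g. i' \<le> i \<Longrightarrow> f \<in> \<Omega> \<Longrightarrow> g \<in> \<Omega> \<Longrightarrow> t i f = t i g \<Longrightarrow> M i' f = M i' g"
  shows "\<Theta> * card {f \<in> \<Omega>. \<exists>i\<le>J. \<Theta> \<le> M i f} \<le> sum (M J) \<Omega>"
proof -
  define S where "S i = {f \<in> \<Omega>. \<Theta> \<le> M i f \<and> (\<forall>i'<i. M i' f < \<Theta>)}" for i
  have U: "{f \<in> \<Omega>. \<exists>i\<le>J. \<Theta> \<le> M i f} = (\<Union>i\<in>{..J}. S i)"
  proof (intro equalityI subsetI)
    fix f assume "f \<in> {f \<in> \<Omega>. \<exists>i\<le>J. \<Theta> \<le> M i f}"
    then obtain i where f: "f \<in> \<Omega>" "i \<le> J" "\<Theta> \<le> M i f" by auto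
    then obtain i0 where i0: "\<Theta> \<le> M i0 f" "\<forall>i'<i0. \<not> \<Theta> \<le> M i' f"
      using exists_least_iff[of "\<lambda>i. \<Theta> \<le> M i f"] by blast
    have "i0 \<le> i" using i0(2) f(3) by (meson not_le)
    thus "f \<in> (\<Union>i\<in>{..J}. S i)" using i0 f unfolding S_def by (auto simp: not_le)
  qed (auto simp: S_def)
  have fS: "finite (S i)" for i using fin unfolding S_def by simp
  have disj: "\<forall>i\<in>{..J}. \<forall>j\<in>{..J}. i \<noteq> j \<longrightarrow> S i \<inter> S j = {}"
  proof (intro ballI impI)
    fix i j :: nat assume "i \<noteq> j"
    then show "S i \<inter> S j = {}" unfolding S_def
      by (cases "i < j") (auto simp: not_less, (meson linorder_neqE_nat not_less)+)
  qed
  have step: "\<Theta> * card (S i) \<le> sum (M J) (S i)" if "i \<le> J" for i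
  proof -
    have "\<Theta> * card (S i) = (\<Sum>f\<in>S i. \<Theta>)" by simp
    also have "\<dots> \<le> sum (M i) (S i)" by (intro sum_mono) (auto simp: S_def)
    also have "\<dots> = sum (M J) (S i)"
    proof (rule mart[symmetric, OF that])
      show "S i \<subseteq> \<Omega>" unfolding S_def by auto
      fix f g assume f: "f \<in> S i" and g: "g \<in> \<Omega>" and tt: "t i f = t i g"
      have "M i' f = M i' g" if "i' \<le> i" for i' using dep[OF that _ g tt] f unfolding S_def by auto
      thus "g \<in> S i" using f g unfolding S_def by auto
    qed
    finally show ?thesis .
  qed
  have "\<Theta> * card {f \<in> \<Omega>. \<exists>i\<le>J. \<Theta> \<le> M i f} = (\<Sum>i\<le>J. \<Theta> * card (S i))"
    unfolding U by (subst card_UN_disjoint) (use fS disj in \<open>auto simp: sum_distrib_left\<close>)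
  also have "\<dots> \<le> (\<Sum>i\<le>J. sum (M J) (S i))" by (intro sum_mono step) auto
  also have "\<dots> = sum (M J) (\<Union>i\<in>{..J}. S i)"
    by (subst sum.UNION_disjoint) (use fS disj in auto)
  also have "\<dots> \<le> sum (M J) \<Omega>"
    by (intro sum_mono2 fin) (auto simp: S_def nn)
  finally show ?thesis .
qed



definition cnt :: "(nat \<Rightarrow> nat) \<Rightarrow> nat \<Rightarrow> (nat \<Rightarrow> nat) \<Rightarrow> nat \<Rightarrow> nat" where
  "cnt h m f i = card {b \<in> {..<m}. h (f b) \<le> i}"

definition trn :: "(nat \<Rightarrow> nat) \<Rightarrow> nat \<Rightarrow> nat \<Rightarrow> (nat \<Rightarrow> nat) \<Rightarrow> nat \<Rightarrow> nat option" where
  "trn h m i f = (\<lambda>b. if b < m \<and> h (f b) \<le> i then Some (f b) else None)"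

definition Bf :: "nat \<Rightarrow> nat \<Rightarrow> real \<Rightarrow> nat \<Rightarrow> real" where
  "Bf n J r i = ((real J - real i) * r + (real n - real J)) / (real n - real i)"

definition Mg :: "(nat \<Rightarrow> nat) \<Rightarrow> nat \<Rightarrow> nat \<Rightarrow> nat \<Rightarrow> real \<Rightarrow> nat \<Rightarrow> (nat \<Rightarrow> nat) \<Rightarrow> real" where
  "Mg h m n J r i f = r ^ cnt h m f i * Bf n J r i ^ (m - cnt h m f i)"

lemma prod_if_card:
  fixes a c :: real
  shows "(\<Prod>b<m. if P b then a else c) = a ^ card {b \<in> {..<m}. P b} * c ^ (m - card {b \<in> {..<m}. P b})"
proof -
  have "(\<Prod>b<m. if P b then a else c) = (\<Prod>b\<in>{..<m} \<inter> {b. P b}. a) * (\<Prod>b\<in>{..<m} \<inter> - {b. P b}. c)"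
    by (rule prod.If_cases) simp
  moreover have "{..<m} \<inter> {b. P b} = {b \<in> {..<m}. P b}" by auto
  moreover have "card ({..<m} \<inter> - {b. P b}) = m - card {b \<in> {..<m}. P b}"
  proof -
    have "{..<m} \<inter> - {b. P b} = {..<m} - {b \<in> {..<m}. P b}" by auto
    moreover have "card ({..<m} - {b \<in> {..<m}. P b}) = m - card {b \<in> {..<m}. P b}"
      by (subst card_Diff_subset) auto
    ultimately show ?thesis by simp
  qed
  ultimately show ?thesis by simp
qed

lemma card_h:
  assumes h: "bij_betw h {1..n} {1..n}"
  shows "card {v \<in> {1..n}. P (h v)} = card {u \<in> {1..n}. P u}"
proof -
  have inj: "inj_on h {v \<in> {1..n}. P (h v)}" using h unfolding bij_betw_def by (auto intro: inj_on_subset)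
  have "h ` {v \<in> {1..n}. P (h v)} = {u \<in> {1..n}. P u}"
  proof (intro equalityI subsetI)
    fix u assume u: "u \<in> {u \<in> {1..n}. P u}"
    then obtain v where "v \<in> {1..n}" "u = h v" using h unfolding bij_betw_def by (metis (no_types, lifting) imageE mem_Collect_eq)
    thus "u \<in> h ` {v \<in> {1..n}. P (h v)}" using u by auto
  next
    fix u assume "u \<in> h ` {v \<in> {1..n}. P (h v)}"
    thus "u \<in> {u \<in> {1..n}. P u}" using h unfolding bij_betw_def by auto
  qed
  thus ?thesis using card_image[OF inj] by simp
qed

lemma fiber_eq:
  assumes f0: "f0 \<in> PiE {..<m} (\<lambda>_. {1..n::nat})"
  shows "{f \<in> PiE {..<m} (\<lambda>_. {1..n}). trn h m i f = trn h m i f0}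
       = PiE {..<m} (\<lambda>b. if h (f0 b) \<le> i then {f0 b} else {v \<in> {1..n}. i < h v})"
proof (intro equalityI subsetI)
  fix f assume "f \<in> {f \<in> PiE {..<m} (\<lambda>_. {1..n}). trn h m i f = trn h m i f0}"
  hence f: "f \<in> PiE {..<m} (\<lambda>_. {1..n})" and e: "\<And>b. trn h m i f b = trn h m i f0 b" by auto
  show "f \<in> PiE {..<m} (\<lambda>b. if h (f0 b) \<le> i then {f0 b} else {v \<in> {1..n}. i < h v})"
  proof (rule PiE_I)
    fix b assume b: "b \<in> {..<m}"
    have fb: "f b \<in> {1..n}" using PiE_mem[OF f b] .
    have bm: "b < m" using b by simp
    show "f b \<in> (if h (f0 b) \<le> i then {f0 b} else {v \<in> {1..n}. i < h v})"
    proof (cases "h (f0 b) \<le> i")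
      case True
      hence "trn h m i f b = Some (f0 b)" using e[of b] bm by (simp add: trn_def)
      hence "f b = f0 b" unfolding trn_def by (simp split: if_splits)
      thus ?thesis using True by simp
    next
      case False
      hence "trn h m i f b = None" using e[of b] bm by (simp add: trn_def)
      hence "\<not> h (f b) \<le> i" using bm unfolding trn_def by (simp split: if_splits)
      thus ?thesis using False fb by simp
    qed
  next
    fix b assume "b \<notin> {..<m}" thus "f b = undefined" using f by auto
  qed
next
  fix f assume f: "f \<in> PiE {..<m} (\<lambda>b. if h (f0 b) \<le> i then {f0 b} else {v \<in> {1..n}. i < h v})"
  have "f \<in> PiE {..<m} (\<lambda>_. {1..n})"
  proof (rule PiE_I)
    fix b assume b: "b \<in> {..<m}"
    have "f0 b \<in> {1..n}" using PiE_mem[OF f0 b] .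
    thus "f b \<in> {1..n}" using PiE_mem[OF f b] by (simp split: if_splits)
  next
    fix b assume "b \<notin> {..<m}" thus "f b = undefined" using f by auto
  qed
  moreover have "trn h m i f b = trn h m i f0 b" for b
  proof (cases "b < m")
    case True
    then have "f b \<in> (if h (f0 b) \<le> i then {f0 b} else {v \<in> {1..n}. i < h v})" using PiE_mem[OF f, of b] by simp
    then show ?thesis unfolding trn_def by (simp split: if_splits)
  qed (simp add: trn_def)
  ultimately show "f \<in> {f \<in> PiE {..<m} (\<lambda>_. {1..n}). trn h m i f = trn h m i f0}" by auto
qed

lemma card_filter_h:
  assumes h: "bij_betw h {1..n} {1..n}" and iJ: "i \<le> J" and Jn: "J \<le> n"
  shows "card {v \<in> {1..n}. i < h v \<and> h v \<le> J} = J - i"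
    and "card {v \<in> {1..n}. i < h v \<and> \<not> h v \<le> J} = n - J"
    and "card {v \<in> {1..n}. i < h v} = n - i"
proof -
  have "card {v \<in> {1..n}. i < h v \<and> h v \<le> J} = card {u \<in> {1..n}. i < u \<and> u \<le> J}"
    using card_h[OF h, of "\<lambda>u. i < u \<and> u \<le> J"] by simp
  also have "{u \<in> {1..n}. i < u \<and> u \<le> J} = {i<..J}" using Jn by auto
  finally show "card {v \<in> {1..n}. i < h v \<and> h v \<le> J} = J - i" by simp
  have "card {v \<in> {1..n}. i < h v \<and> \<not> h v \<le> J} = card {u \<in> {1..n}. i < u \<and> \<not> u \<le> J}"
    using card_h[OF h, of "\<lambda>u. i < u \<and> \<not> u \<le> J"] by simp
  also have "{u \<in> {1..n}. i < u \<and> \<not> u \<le> J} = {J<..n}" using iJ by auto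
  finally show "card {v \<in> {1..n}. i < h v \<and> \<not> h v \<le> J} = n - J" by simp
  have "card {v \<in> {1..n}. i < h v} = card {u \<in> {1..n}. i < u}"
    using card_h[OF h, of "\<lambda>u. i < u"] by simp
  also have "{u \<in> {1..n}. i < u} = {i<..n}" by auto
  finally show "card {v \<in> {1..n}. i < h v} = n - i" by simp
qed

lemma pow_cnt:
  fixes r :: real
  shows "r ^ cnt h m f J = (\<Prod>b<m. if h (f b) \<le> J then r else 1)"
  unfolding cnt_def prod_if_card by simp

lemma fiber_sum:
  fixes r :: real
  assumes h: "bij_betw h {1..n} {1..n}" and iJ: "i \<le> J" and Jn: "J \<le> n"
    and f0: "f0 \<in> PiE {..<m} (\<lambda>_. {1..n::nat})"
  shows "(\<Sum>f \<in> PiE {..<m} (\<lambda>b. if h (f0 b) \<le> i then {f0 b} else {v \<in> {1..n}. i < h v}). r ^ cnt h m f J)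
     = r ^ cnt h m f0 i * ((real J - real i) * r + (real n - real J)) ^ (m - cnt h m f0 i)"
proof -
  define A where "A b = (if h (f0 b) \<le> i then {f0 b} else {v \<in> {1..n}. i < h v})" for b
  define w where "w v = (if h v \<le> J then r else 1)" for v
  have "(\<Sum>f \<in> PiE {..<m} A. r ^ cnt h m f J) = (\<Sum>f \<in> PiE {..<m} A. \<Prod>b<m. w (f b))"
    unfolding pow_cnt w_def ..
  also have "\<dots> = (\<Prod>b<m. \<Sum>v\<in>A b. w v)"
    by (rule prod_sum_PiE[symmetric]) (auto simp: A_def)
  also have "\<dots> = (\<Prod>b<m. if h (f0 b) \<le> i then r else ((real J - real i) * r + (real n - real J)))"
  proof (rule prod.cong[OF refl])
    fix b assume "b \<in> {..<m}"
    show "(\<Sum>v\<in>A b. w v) = (if h (f0 b) \<le> i then r else ((real J - real i) * r + (real n - real J)))"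
    proof (cases "h (f0 b) \<le> i")
      case True
      then show ?thesis using iJ by (simp add: A_def w_def)
    next
      case False
      have "(\<Sum>v\<in>A b. w v) = (\<Sum>v\<in>{v \<in> {1..n}. i < h v}. if h v \<le> J then r else 1)"
        using False by (simp add: A_def w_def)
      also have "\<dots> = (\<Sum>v\<in>{v \<in> {1..n}. i < h v} \<inter> {v. h v \<le> J}. r) + (\<Sum>v\<in>{v \<in> {1..n}. i < h v} \<inter> - {v. h v \<le> J}. 1)"
        by (rule sum.If_cases) simp
      also have "{v \<in> {1..n}. i < h v} \<inter> {v. h v \<le> J} = {v \<in> {1..n}. i < h v \<and> h v \<le> J}" by auto
      also have "{v \<in> {1..n}. i < h v} \<inter> - {v. h v \<le> J} = {v \<in> {1..n}. i < h v \<and> \<not> h v \<le> J}" by auto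
      finally show ?thesis using False card_filter_h[OF h iJ Jn] iJ Jn by (simp add: of_nat_diff)
    qed
  qed
  also have "\<dots> = r ^ cnt h m f0 i * ((real J - real i) * r + (real n - real J)) ^ (m - cnt h m f0 i)"
    unfolding prod_if_card cnt_def ..
  finally show ?thesis unfolding A_def .
qed

lemma fiber_card:
  assumes h: "bij_betw h {1..n} {1..n}" and i: "i \<le> n"
  shows "real (card (PiE {..<m} (\<lambda>b. if h (f0 b) \<le> i then {f0 b} else {v \<in> {1..n}. i < h v})))
     = (real n - real i) ^ (m - cnt h m f0 i)"
proof -
  have "real (card (PiE {..<m} (\<lambda>b. if h (f0 b) \<le> i then {f0 b} else {v \<in> {1..n}. i < h v})))
     = (\<Prod>b<m. real (card (if h (f0 b) \<le> i then {f0 b} else {v \<in> {1..n}. i < h v})))"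
    by (simp add: card_PiE)
  also have "\<dots> = (\<Prod>b<m. if h (f0 b) \<le> i then 1 else (real n - real i))"
    using card_filter_h(3)[OF h order.refl i] i by (intro prod.cong) (auto simp: of_nat_diff)
  also have "\<dots> = (real n - real i) ^ (m - cnt h m f0 i)"
    unfolding prod_if_card cnt_def by simp
  finally show ?thesis .
qed

lemma cnt_trn: "cnt h m f i = card {b. trn h m i f b \<noteq> None}"
  unfolding cnt_def trn_def by (rule arg_cong[where f = card]) auto

lemma trn_mono:
  assumes "i' \<le> i" "trn h m i f = trn h m i g"
  shows "trn h m i' f = trn h m i' g"
proof
  fix b
  have e: "trn h m i f b = trn h m i g b" using assms(2) by simp
  show "trn h m i' f b = trn h m i' g b"
  proof (cases "b < m \<and> h (f b) \<le> i")
    case True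
    then have "g b = f b" "h (g b) \<le> i" using e unfolding trn_def by (auto split: if_splits)
    then show ?thesis using True unfolding trn_def by simp
  next
    case False
    then have "\<not> (b < m \<and> h (g b) \<le> i)" using e unfolding trn_def by (auto split: if_splits)
    then show ?thesis using False assms(1) unfolding trn_def by auto
  qed
qed

lemma Bf_J: "J < n \<Longrightarrow> Bf n J r J = 1"
  unfolding Bf_def by simp

lemma martingale:
  fixes r :: real
  assumes h: "bij_betw h {1..n} {1..n}" and iJ: "i \<le> J" and Jn: "J < n"
    and S: "S \<subseteq> PiE {..<m} (\<lambda>_. {1..n})"
    and sat: "\<And>f g. f \<in> S \<Longrightarrow> g \<in> PiE {..<m} (\<lambda>_. {1..n}) \<Longrightarrow> trn h m i f = trn h m i g \<Longrightarrow> g \<in> S"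
  shows "sum (Mg h m n J r J) S = sum (Mg h m n J r i) S"
proof -
  let ?\<Omega> = "PiE {..<m} (\<lambda>_. {1..n})"
  let ?t = "trn h m i"
  have finS: "finite S" using S finite_subset by (metis finite_PiE finite_atLeastAtMost finite_lessThan)
  have fib: "{f \<in> S. ?t f = ?t f0} = PiE {..<m} (\<lambda>b. if h (f0 b) \<le> i then {f0 b} else {v \<in> {1..n}. i < h v})"
    if f0: "f0 \<in> S" for f0
  proof -
    have "{f \<in> S. ?t f = ?t f0} = {f \<in> ?\<Omega>. ?t f = ?t f0}"
      using S sat[OF f0] by auto
    also have "\<dots> = PiE {..<m} (\<lambda>b. if h (f0 b) \<le> i then {f0 b} else {v \<in> {1..n}. i < h v})"
      using fiber_eq S f0 by blast
    finally show ?thesis .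
  qed
  have inner: "(\<Sum>f \<in> {f \<in> S. ?t f = y}. Mg h m n J r J f) = (\<Sum>f \<in> {f \<in> S. ?t f = y}. Mg h m n J r i f)"
    if y: "y \<in> ?t ` S" for y
  proof -
    obtain f0 where f0: "f0 \<in> S" "y = ?t f0" using y by auto
    have f0\<Omega>: "f0 \<in> ?\<Omega>" using f0 S by auto
    let ?F = "PiE {..<m} (\<lambda>b. if h (f0 b) \<le> i then {f0 b} else {v \<in> {1..n}. i < h v})"
    have "(\<Sum>f \<in> {f \<in> S. ?t f = y}. Mg h m n J r J f) = (\<Sum>f \<in> ?F. r ^ cnt h m f J)"
      unfolding f0(2) fib[OF f0(1)] Mg_def Bf_J[OF Jn] by simp
    also have "\<dots> = r ^ cnt h m f0 i * ((real J - real i) * r + (real n - real J)) ^ (m - cnt h m f0 i)"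
      by (rule fiber_sum[OF h iJ _ f0\<Omega>]) (use Jn in simp)
    also have "\<dots> = real (card ?F) * Mg h m n J r i f0"
    proof -
      have ni: "real n - real i > 0" using iJ Jn by simp
      have "real (card ?F) = (real n - real i) ^ (m - cnt h m f0 i)"
        by (rule fiber_card[OF h]) (use iJ Jn in simp)
      thus ?thesis unfolding Mg_def Bf_def using ni by (simp add: power_divide)
    qed
    also have "\<dots> = (\<Sum>f \<in> ?F. Mg h m n J r i f)"
    proof -
      have "Mg h m n J r i f = Mg h m n J r i f0" if "f \<in> ?F" for f
      proof -
        have "f \<in> {f \<in> S. ?t f = ?t f0}" using that fib[OF f0(1)] by simp
        hence "?t f = ?t f0" by simp
        hence "cnt h m f i = cnt h m f0 i" unfolding cnt_trn by simp
        thus ?thesis unfolding Mg_def by simp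
      qed
      thus ?thesis by simp
    qed
    also have "\<dots> = (\<Sum>f \<in> {f \<in> S. ?t f = y}. Mg h m n J r i f)"
      unfolding f0(2) fib[OF f0(1)] ..
    finally show ?thesis .
  qed
  have "sum (Mg h m n J r J) S = (\<Sum>y \<in> ?t ` S. \<Sum>f \<in> {f \<in> S. ?t f = y}. Mg h m n J r J f)"
    by (rule sum.group[symmetric]) (use finS in auto)
  also have "\<dots> = (\<Sum>y \<in> ?t ` S. \<Sum>f \<in> {f \<in> S. ?t f = y}. Mg h m n J r i f)"
    by (rule sum.cong[OF refl] inner)+
  also have "\<dots> = sum (Mg h m n J r i) S"
    by (rule sum.group) (use finS in auto)
  finally show ?thesis .
qed


lemma Bf_pos:
  assumes "i \<le> J" "J < n" "r > 0"
  shows "Bf n J r i > 0"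
proof -
  have "(real J - real i) * r \<ge> 0" using assms by simp
  moreover have "real n - real J > 0" "real n - real i > 0" using assms by auto
  ultimately show ?thesis unfolding Bf_def by (intro divide_pos_pos) linarith+
qed

lemma cnt_le: "cnt h m f i \<le> m"
  unfolding cnt_def by (rule order.trans[OF card_mono[of "{..<m}"]]) auto

lemma half_bound:
  fixes r \<Theta> :: real
  assumes h: "bij_betw h {1..n} {1..n}" and Jn: "J < n" and r: "r > 0" and th: "\<Theta> > 0"
  shows "real (card {f \<in> PiE {..<m} (\<lambda>_. {1..n}). \<exists>i\<le>J. \<Theta> \<le> Mg h m n J r i f})
      / real (card (PiE {..<m} (\<lambda>_. {1..n::nat}))) \<le> Bf n J r 0 ^ m / \<Theta>"
proof -
  let ?\<Omega> = "PiE {..<m} (\<lambda>_. {1..n::nat})"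
  have fin: "finite ?\<Omega>" by (simp add: finite_PiE)
  have ne: "?\<Omega> \<noteq> {}" using Jn by (simp add: PiE_eq_empty_iff)
  have cpos: "real (card ?\<Omega>) > 0" using fin ne by (simp add: card_gt_0_iff)
  have doob: "\<Theta> * card {f \<in> ?\<Omega>. \<exists>i\<le>J. \<Theta> \<le> Mg h m n J r i f} \<le> sum (Mg h m n J r J) ?\<Omega>"
  proof (rule doob_finite[where t = "trn h m"])
    fix f assume "f \<in> ?\<Omega>"
    show "Mg h m n J r J f \<ge> 0" unfolding Mg_def Bf_J[OF Jn] using r by simp
  next
    fix i S assume "i \<le> J" "S \<subseteq> ?\<Omega>"
      "\<And>f g. f \<in> S \<Longrightarrow> g \<in> ?\<Omega> \<Longrightarrow> trn h m i f = trn h m i g \<Longrightarrow> g \<in> S"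
    then show "sum (Mg h m n J r J) S = sum (Mg h m n J r i) S"
      by (intro martingale[OF h _ Jn]) auto
  next
    fix i i' f g assume "i' \<le> i" "trn h m i f = trn h m i g"
    then have "trn h m i' f = trn h m i' g" by (rule trn_mono)
    then show "Mg h m n J r i' f = Mg h m n J r i' g" unfolding Mg_def cnt_trn by simp
  qed (use fin th in auto)
  have "sum (Mg h m n J r J) ?\<Omega> = sum (Mg h m n J r 0) ?\<Omega>"
    by (rule martingale[OF h _ Jn]) auto
  also have "\<dots> = real (card ?\<Omega>) * Bf n J r 0 ^ m"
  proof -
    have "cnt h m f 0 = 0" if "f \<in> ?\<Omega>" for f
    proof -
      have "h (f b) \<ge> 1" if "b < m" for b
      proof -
        have "f b \<in> {1..n}" using PiE_mem[OF \<open>f \<in> ?\<Omega>\<close>, of b] that by simp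
        hence "h (f b) \<in> {1..n}" using h unfolding bij_betw_def by auto
        thus ?thesis by simp
      qed
      hence "{b \<in> {..<m}. h (f b) \<le> 0} = {}" by fastforce
      thus ?thesis unfolding cnt_def by simp
    qed
    thus ?thesis unfolding Mg_def by simp
  qed
  finally have "\<Theta> * card {f \<in> ?\<Omega>. \<exists>i\<le>J. \<Theta> \<le> Mg h m n J r i f} \<le> real (card ?\<Omega>) * Bf n J r 0 ^ m"
    using doob by linarith
  thus ?thesis using th cpos by (simp add: divide_simps mult.commute)
qed

lemma Mg_ln:
  fixes r :: real
  assumes "r > 0" "Bf n J r i > 0"
  shows "ln (Mg h m n J r i f) = real (cnt h m f i) * ln r + (real m - real (cnt h m f i)) * ln (Bf n J r i)"
  using assms cnt_le[of h m f i] unfolding Mg_def by (simp add: ln_mult ln_realpow of_nat_diff)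

lemma ge_from_ln:
  fixes a b :: real
  assumes "a > 0" "b > 0" "ln a \<ge> ln b"
  shows "a \<ge> b"
  using assms by simp

lemma rev_bij: "bij_betw (\<lambda>v. Suc n - v) {1..n} {1..n}"
  by (rule bij_betw_byWitness[where f' = "\<lambda>v. Suc n - v"]) auto

lemma cnt_rev:
  assumes f: "f \<in> PiE {..<m} (\<lambda>_. {1..n::nat})" and i: "i \<le> n"
  shows "cnt (\<lambda>v. Suc n - v) m f (n - i) = m - prefix_load m f i"
proof -
  have "{b \<in> {..<m}. Suc n - f b \<le> n - i} = {..<m} - {b \<in> {..<m}. f b \<le> i}"
  proof -
    have "f b \<in> {1..n}" if "b < m" for b using PiE_mem[OF f, of b] that by simp
    thus ?thesis using i by auto
  qed
  moreover have "card ({..<m} - {b \<in> {..<m}. f b \<le> i}) = m - card {b \<in> {..<m}. f b \<le> i}"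
    by (subst card_Diff_subset) auto
  ultimately show ?thesis unfolding cnt_def prefix_load_def by simp
qed

theorem mainTheorem2:
  fixes c1 c2 :: real
  assumes "c1 > 0" and "c2 > 0"
  shows "\<exists>c>0. \<exists>K::real. \<forall>(n::nat) (m::nat) (x::real) (k::real).
    n \<ge> 1 \<longrightarrow> c1 * real n \<le> real m \<longrightarrow> real m \<le> c2 * real n \<longrightarrow>
    x > 1 \<longrightarrow> k \<ge> 1 \<longrightarrow> k \<ge> K \<longrightarrow>
    measure_pmf.prob (balls_into_bins m n)
      {f. \<exists>i\<in>{1..n}. real (prefix_load m f i)
            \<ge> (1 + 1 / x) * real i * (real m / real n) + k * x}
    \<le> 2 powr (- c * k)"
proof (rule exI[of _ "1/24"], rule conjI, simp, rule exI[of _ 24], intro allI impI)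
  fix n m :: nat and x k :: real
  assume n: "1 \<le> n" and "c1 * real n \<le> real m" and "real m \<le> c2 * real n"
    and x: "1 < x" and k: "1 \<le> k" and kK: "24 \<le> k"
  define \<Omega> where "\<Omega> = PiE {..<m} (\<lambda>_. {1..n::nat})"
  define E where "E = {f. \<exists>i\<in>{1..n}. real (prefix_load m f i) \<ge> (1 + 1 / x) * real i * (real m / real n) + k * x}"
  define J where "J = n div 2"
  have Jn: "J < n" using n unfolding J_def by simp
  have J2: "2 * real J \<le> real n" unfolding J_def by linarith
  have fin: "finite \<Omega>" unfolding \<Omega>_def by (simp add: finite_PiE)
  have ne: "\<Omega> \<noteq> {}" using n unfolding \<Omega>_def by (simp add: PiE_eq_empty_iff)
  define r1 where "r1 = 1 + 1 / (2 * x)"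
  define r2 where "r2 = 1 - 1 / x"
  have r1: "r1 > 0" using x unfolding r1_def by (simp add: add_pos_pos)
  have r2: "r2 > 0" using x unfolding r2_def by simp
  define h2 where "h2 = (\<lambda>v. Suc n - v)"
  define \<Theta>1 where "\<Theta>1 = Bf n J r1 0 ^ m * exp (k / 12)"
  define \<Theta>2 where "\<Theta>2 = Bf n J r2 0 ^ m * exp (k / 2)"
  have B10: "Bf n J r1 0 > 0" by (rule Bf_pos) (use Jn r1 in auto)
  have B20: "Bf n J r2 0 > 0" by (rule Bf_pos) (use Jn r2 in auto)
  have th1: "\<Theta>1 > 0" unfolding \<Theta>1_def using B10 by simp
  have th2: "\<Theta>2 > 0" unfolding \<Theta>2_def using B20 by simp
  define U1 where "U1 = {f \<in> \<Omega>. \<exists>i\<le>J. \<Theta>1 \<le> Mg id m n J r1 i f}"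
  define U2 where "U2 = {f \<in> \<Omega>. \<exists>i\<le>J. \<Theta>2 \<le> Mg h2 m n J r2 i f}"
  have sub: "\<Omega> \<inter> E \<subseteq> U1 \<union> U2"
  proof
    fix f assume "f \<in> \<Omega> \<inter> E"
    then obtain i where f: "f \<in> \<Omega>" and i: "i \<in> {1..n}"
      and cr: "real (prefix_load m f i) \<ge> (1 + 1 / x) * real i * (real m / real n) + k * x"
      unfolding E_def by auto
    have Lm: "prefix_load m f i \<le> m" using cnt_le[of id m f i] unfolding cnt_def prefix_load_def by simp
    show "f \<in> U1 \<union> U2"
    proof (cases "i \<le> J")
      case True
      have Bp: "Bf n J r1 i > 0" by (rule Bf_pos) (use True Jn r1 in auto)
      have cntid: "cnt id m f i = prefix_load m f i" unfolding cnt_def prefix_load_def by simp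
      have an: "real m * ln (Bf n J r1 0) + k / 12 \<le> real (prefix_load m f i) * ln r1 + (real m - real (prefix_load m f i)) * ln (Bf n J r1 i)"
        using upper_an[of "real n" "real J" "real i" x k "real (prefix_load m f i)" "real m"] J2 True n x k cr Lm
        unfolding r1_def Bf_def by simp
      have "\<Theta>1 \<le> Mg id m n J r1 i f"
      proof (rule ge_from_ln)
        show "Mg id m n J r1 i f > 0" unfolding Mg_def using r1 Bp by simp
        show "\<Theta>1 > 0" by (rule th1)
        show "ln \<Theta>1 \<le> ln (Mg id m n J r1 i f)"
          unfolding Mg_ln[OF r1 Bp] cntid \<Theta>1_def using B10 an by (simp add: ln_mult ln_realpow)
      qed
      thus ?thesis using f True unfolding U1_def by auto
    next
      case False
      define j where "j = n - i"
      have jJ: "j \<le> J" using False i unfolding j_def J_def by auto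
      have in_: "i \<le> n" using i by simp
      have Bp: "Bf n J r2 j > 0" by (rule Bf_pos) (use jJ Jn r2 in auto)
      have cntr: "cnt h2 m f j = m - prefix_load m f i" unfolding h2_def j_def
        using cnt_rev[OF f[unfolded \<Omega>_def] in_] .
      have ij: "real i = real n - real j" unfolding j_def using in_ by (simp add: of_nat_diff)
      have RT: "real m - real (prefix_load m f i) \<le> real m - k * x - (1 + 1 / x) * (real n - real j) * (real m / real n)"
        using cr unfolding ij by linarith
      have an: "real m * ln (Bf n J r2 0) + k / 2 \<le> (real m - real (prefix_load m f i)) * ln r2 + (real m - (real m - real (prefix_load m f i))) * ln (Bf n J r2 j)"
        using lower_an[of "real n" "real J" "real j" x k "real m - real (prefix_load m f i)" "real m"] J2 jJ n x k RT Lm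
        unfolding r2_def Bf_def by simp
      have "\<Theta>2 \<le> Mg h2 m n J r2 j f"
      proof (rule ge_from_ln)
        show "Mg h2 m n J r2 j f > 0" unfolding Mg_def using r2 Bp by simp
        show "\<Theta>2 > 0" by (rule th2)
        show "ln \<Theta>2 \<le> ln (Mg h2 m n J r2 j f)"
          unfolding Mg_ln[OF r2 Bp] cntr \<Theta>2_def using B20 an Lm by (simp add: ln_mult ln_realpow of_nat_diff)
      qed
      thus ?thesis using f jJ unfolding U2_def by auto
    qed
  qed
  have prob: "measure_pmf.prob (balls_into_bins m n) E = real (card (\<Omega> \<inter> E)) / real (card \<Omega>)"
    unfolding balls_into_bins_def \<Omega>_def[symmetric] using fin ne by (simp add: measure_pmf_of_set)
  have cpos: "real (card \<Omega>) > 0" using fin ne by (simp add: card_gt_0_iff)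
  have le: "real (card (\<Omega> \<inter> E)) \<le> real (card U1) + real (card U2)"
  proof -
    have "card (\<Omega> \<inter> E) \<le> card (U1 \<union> U2)" by (rule card_mono) (use sub fin in \<open>auto simp: U1_def U2_def\<close>)
    also have "\<dots> \<le> card U1 + card U2" by (rule card_Un_le)
    finally show ?thesis by linarith
  qed
  have A: "real (card (\<Omega> \<inter> E)) / real (card \<Omega>) \<le> (real (card U1) + real (card U2)) / real (card \<Omega>)"
    by (rule divide_right_mono[OF le]) simp
  have B: "(real (card U1) + real (card U2)) / real (card \<Omega>) = real (card U1) / real (card \<Omega>) + real (card U2) / real (card \<Omega>)"
    by (rule add_divide_distrib)
  have P1: "measure_pmf.prob (balls_into_bins m n) E \<le> real (card U1) / real (card \<Omega>) + real (card U2) / real (card \<Omega>)"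
    using prob A B by linarith
  have P2: "real (card U1) / real (card \<Omega>) \<le> Bf n J r1 0 ^ m / \<Theta>1"
    unfolding U1_def \<Omega>_def by (rule half_bound[OF bij_betw_id Jn r1 th1])
  have P3: "Bf n J r1 0 ^ m / \<Theta>1 = exp (- k / 12)"
    unfolding \<Theta>1_def using B10 by (simp add: exp_minus field_simps)
  have P4: "real (card U2) / real (card \<Omega>) \<le> Bf n J r2 0 ^ m / \<Theta>2"
    unfolding U2_def \<Omega>_def h2_def by (rule half_bound[OF rev_bij Jn r2 th2])
  have P5: "Bf n J r2 0 ^ m / \<Theta>2 = exp (- k / 2)"
    unfolding \<Theta>2_def using B20 by (simp add: exp_minus field_simps)
  have P6: "exp (- k / 12) + exp (- k / 2) \<le> 2 powr (- (1/24) * k)"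
  proof -
    have "exp (- k / 2) \<le> exp (- k / 12)" using k by simp
    moreover have "2 * exp (- k / 12) \<le> exp (- k / 24)"
    proof -
      have "exp (1::real) \<ge> 2" using exp_ge_add_one_self[of 1] by simp
      moreover have "exp (1::real) \<le> exp (k / 24)" using kK by simp
      ultimately have "2 \<le> exp (k / 24)" by linarith
      hence "2 * exp (- k / 12) \<le> exp (k / 24) * exp (- k / 12)" by simp
      also have "\<dots> = exp (- k / 24)" by (simp flip: exp_add)
      finally show ?thesis .
    qed
    moreover have "exp (- k / 24) \<le> 2 powr (- (1/24) * k)"
    proof -
      have "ln 2 \<le> (1::real)" using ln_le_minus_one[of 2] by simp
      hence "(k / 24) * ln 2 \<le> k / 24" using k by (intro mult_left_le) auto
      hence "- k / 24 \<le> (- (1/24) * k) * ln 2" by simp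
      thus ?thesis unfolding powr_def by simp
    qed
    ultimately show ?thesis by linarith
  qed
  have "measure_pmf.prob (balls_into_bins m n) E \<le> 2 powr (- (1/24) * k)"
    using P1 P2 P3 P4 P5 P6 by linarith
  thus "measure_pmf.prob (balls_into_bins m n) {f. \<exists>i\<in>{1..n}. real (prefix_load m f i) \<ge> (1 + 1 / x) * real i * (real m / real n) + k * x} \<le> 2 powr (- (1/24) * k)"
    unfolding E_def .
qed

end
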